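(* Let $q$ be a prime power, let $\mathcal{F}=(\mathcal{F}_1,\ldots,\mathcal{F}_r)$ be a flag on $\mathbb{F}_{q^n}$ whose best friend is the subfield $\mathbb{F}_{q^m}$, and let $\beta\in\mathbb{F}_{q^n}^*$. For $1\le i\le r$ let $\mathbb{F}_{q^{m_i}}$ denote the best friend of $\mathcal{F}_i$. Then $\mathrm{Orb}_\beta(\mathcal{F})$ is disjoint if and only if $$\langle\beta\rangle\cap\mathbb{F}_{q^m}^*=\langle\beta\rangle\cap\mathbb{F}_{q^{m_1}}^*=\cdots=\langle\beta\rangle\cap\mathbb{F}_{q^{m_r}}^*.$$ In particular, the cyclic orbit flag code $\mathrm{Orb}(\mathcal{F})$ is disjoint if and only if all the subspaces $\mathcal{F}_1,\ldots,\mathcal{F}_r$ have $\mathbb{F}_{q^m}$ as their best friend.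
   Context: A flag on $\mathbb{F}_{q^n}$ is a sequence $(\mathcal{F}_1,\ldots,\mathcal{F}_r)$ of $\mathbb{F}_q$-subspaces with $\{0\}\subsetneq\mathcal{F}_1\subsetneq\cdots\subsetneq\mathcal{F}_r\subsetneq\mathbb{F}_{q^n}$. For $\gamma\in\mathbb{F}_{q^n}^*$, $\mathcal{U}\gamma=\{u\gamma:u\in\mathcal{U}\}$, $\mathcal{F}\gamma=(\mathcal{F}_1\gamma,\ldots,\mathcal{F}_r\gamma)$; $\mathrm{Orb}_\beta(\mathcal{F})=\{\mathcal{F}\beta^j:0\le j\le|\beta|-1\}$ with $|\beta|$ the multiplicative order, and $\mathrm{Orb}(\mathcal{F})=\{\mathcal{F}\gamma:\gamma\in\mathbb{F}_{q^n}^*\}$. A subfield $\mathbb{F}_{q^k}$ is a friend of a subspace $\mathcal{U}$ if $\mathcal{U}$ is an $\mathbb{F}_{q^k}$-vector space, and a friend of $\mathcal{F}$ if it is a friend of every $\mathcal{F}_i$; the best friend is the largest friend. For a set $\mathcal{C}$ of flags, its $i$-th projected code $\mathcal{C}_i$ is the set of $i$-th subspaces of its flags; $\mathcal{C}$ is disjoint if $|\mathcal{C}_1|=\cdots=|\mathcal{C}_r|=|\mathcal{C}|$. *)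

theory Defs
  imports "HOL-Computational_Algebra.Primes"
begin

(* The ambient field F_{q^n} is a finite field type 'a with CARD('a) = q^n. *)

definition prime_power :: "nat \<Rightarrow> bool" where
  "prime_power q \<longleftrightarrow> (\<exists>p k. prime p \<and> k > 0 \<and> q = p ^ k)"

(* The subfield F_{q^k} of F_{q^n} (for k dvd n): the roots of X^(q^k) - X. *)
definition subfield_set :: "nat \<Rightarrow> nat \<Rightarrow> 'a::field set" where
  "subfield_set q k = {x. x ^ (q ^ k) = x}"

definition is_subspace_over :: "nat \<Rightarrow> nat \<Rightarrow> 'a::field set \<Rightarrow> bool" where
  "is_subspace_over q k U \<longleftrightarrow>
     0 \<in> U \<and> (\<forall>u\<in>U. \<forall>v\<in>U. u + v \<in> U) \<and> (\<forall>u\<in>U. - u \<in> U) \<and>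
     (\<forall>c\<in>subfield_set q k. \<forall>u\<in>U. c * u \<in> U)"

abbreviation Fq_subspace :: "nat \<Rightarrow> 'a::field set \<Rightarrow> bool" where
  "Fq_subspace q U \<equiv> is_subspace_over q 1 U"

definition friend :: "nat \<Rightarrow> nat \<Rightarrow> nat \<Rightarrow> 'a::field set \<Rightarrow> bool" where
  "friend q n k U \<longleftrightarrow> k dvd n \<and> is_subspace_over q k U"

definition best_friend :: "nat \<Rightarrow> nat \<Rightarrow> 'a::field set \<Rightarrow> nat" where
  "best_friend q n U = (GREATEST k. friend q n k U)"

definition is_flag :: "nat \<Rightarrow> 'a::field set list \<Rightarrow> bool" where
  "is_flag q F \<longleftrightarrow> length F \<ge> 1 \<and> (\<forall>i<length F. Fq_subspace q (F ! i)) \<and>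
     {0} \<subset> F ! 0 \<and> (\<forall>i. Suc i < length F \<longrightarrow> F ! i \<subset> F ! Suc i) \<and>
     F ! (length F - 1) \<subset> UNIV"

definition flag_friend :: "nat \<Rightarrow> nat \<Rightarrow> nat \<Rightarrow> 'a::field set list \<Rightarrow> bool" where
  "flag_friend q n k F \<longleftrightarrow> (\<forall>i<length F. friend q n k (F ! i))"

definition flag_best_friend :: "nat \<Rightarrow> nat \<Rightarrow> 'a::field set list \<Rightarrow> nat" where
  "flag_best_friend q n F = (GREATEST k. flag_friend q n k F)"

definition set_mult :: "'a::field set \<Rightarrow> 'a \<Rightarrow> 'a set" where
  "set_mult U g = (\<lambda>u. u * g) ` U"

definition flag_mult :: "'a::field set list \<Rightarrow> 'a \<Rightarrow> 'a set list" where
  "flag_mult F g = map (\<lambda>U. set_mult U g) F"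

definition mult_order :: "'a::field \<Rightarrow> nat" where
  "mult_order b = (LEAST k. k > 0 \<and> b ^ k = 1)"

definition cyclic_subgroup :: "'a::field \<Rightarrow> 'a set" where
  "cyclic_subgroup b = range (\<lambda>j::nat. b ^ j)"

definition Orb_beta :: "'a::field \<Rightarrow> 'a set list \<Rightarrow> 'a set list set" where
  "Orb_beta b F = {flag_mult F (b ^ j) | j. j < mult_order b}"

definition Orb :: "'a::field set list \<Rightarrow> 'a set list set" where
  "Orb F = {flag_mult F g | g. g \<noteq> 0}"

(* i-th projected code (0-based index i < r) *)
definition projected_code :: "'a set list set \<Rightarrow> nat \<Rightarrow> 'a set set" where
  "projected_code C i = (\<lambda>Fl. Fl ! i) ` C"

definition disjoint_code :: "nat \<Rightarrow> 'a set list set \<Rightarrow> bool" where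
  "disjoint_code r C \<longleftrightarrow> (\<forall>i<r. card (projected_code C i) = card C)"

end

theory Submission
  imports Defs "HOL-Computational_Algebra.Polynomial"
begin


lemma dvd_pow_diff_gen:
  fixes z :: "'b::comm_ring_1"
  shows "(z ^ (Q ^ k) - z) dvd (z ^ (Q ^ (k * j)) - z)"
proof (induction j)
  case 0
  then show ?case by simp
next
  case (Suc j)
  define a where "a = z ^ (Q ^ (k * j))"
  have e: "z ^ (Q ^ (k * Suc j)) = a ^ (Q ^ k)"
    by (simp add: a_def power_add power_mult[symmetric] mult.commute)
  have "(a - z) dvd (a ^ (Q ^ k) - z ^ (Q ^ k))"
    by (simp add: power_diff_sumr2)
  then have "(z ^ (Q ^ k) - z) dvd (a ^ (Q ^ k) - z ^ (Q ^ k))"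
    using Suc.IH a_def dvd_trans by blast
  then have "(z ^ (Q ^ k) - z) dvd ((a ^ (Q ^ k) - z ^ (Q ^ k)) + (z ^ (Q ^ k) - z))"
    by (rule dvd_add[OF _ dvd_refl])
  moreover have "z ^ (Q ^ (k * Suc j)) - z = (a ^ (Q ^ k) - z ^ (Q ^ k)) + (z ^ (Q ^ k) - z)"
    using e by simp
  ultimately show ?case by simp
qed

locale ffq =
  fixes q n :: nat and ty :: "'a::{field,finite} itself"
  assumes pp: "prime_power q"
    and card_a: "card (UNIV :: 'a set) = q ^ n"
begin

abbreviation SF :: "nat \<Rightarrow> 'a set" where "SF k \<equiv> subfield_set q k"

lemma q_ge2: "q \<ge> 2"
proof -
  obtain p e where pe: "prime p" "e > 0" "q = p ^ e" using pp unfolding prime_power_def by blast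
  have "p > 0" using pe(1) prime_gt_0_nat by blast
  then have "p ^ 1 \<le> p ^ e" using pe by (intro power_increasing) auto
  then show ?thesis using pe prime_ge_2_nat[OF pe(1)] by simp
qed

lemma n_pos: "n \<ge> 1"
proof (rule ccontr)
  assume "\<not> n \<ge> 1"
  then have "card (UNIV :: 'a set) = 1" using card_a by simp
  then obtain x where "(UNIV :: 'a set) = {x}" using card_1_singletonE by blast
  then show False by (metis UNIV_I singletonD zero_neq_one)
qed

lemma of_nat_card_zero: "of_nat (card (UNIV :: 'a set)) = (0::'a)"
proof -
  have "(\<Sum>y\<in>UNIV. (1::'a) + y) = (\<Sum>y\<in>UNIV. y)"
    by (rule sum.reindex_bij_witness[of _ "\<lambda>y. y - 1" "\<lambda>y. 1 + y"]) auto
  then show ?thesis by (simp add: sum.distrib)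
qed

lemma CHAR_dvd_card: "CHAR('a) dvd card (UNIV :: 'a set)"
  using of_nat_card_zero of_nat_eq_0_iff_char_dvd by blast

lemma char_eq: "\<exists>e. CHAR('a) ^ e = q"
proof -
  obtain p e where pe: "prime p" "e > 0" "q = p ^ e" using pp unfolding prime_power_def by blast
  have cpos: "CHAR('a) > 0" by (simp add: finite_imp_CHAR_pos)
  have pc: "prime CHAR('a)" using prime_CHAR_semidom[OF cpos] .
  have "CHAR('a) dvd p ^ (e * n)" using CHAR_dvd_card card_a pe
    by (simp add: power_mult)
  then have "CHAR('a) dvd p" using pc prime_dvd_power by blast
  then have "CHAR('a) = p" using pc pe(1) primes_dvd_imp_eq by blast
  then show ?thesis using pe by blast
qed

lemma prime_char: "prime CHAR('a)"
proof -
  have "CHAR('a) > 0" by (rule finite_imp_CHAR_pos) simp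
  then show ?thesis by (rule prime_CHAR_semidom)
qed

lemma frob_add: "((x::'a) + y) ^ (q ^ k) = x ^ (q ^ k) + y ^ (q ^ k)"
proof -
  obtain e where "CHAR('a) ^ e = q" using char_eq by blast
  then have "q ^ k = CHAR('a) ^ (e * k)" by (simp add: power_mult)
  then show ?thesis using freshmans_dream'[OF prime_char] by blast
qed

lemma frob_neg1: "(-1::'a) ^ (q ^ k) = -1"
proof -
  have "(0::'a) = (1 + -1) ^ (q ^ k)" using q_ge2 by simp
  also have "\<dots> = 1 + (-1) ^ (q ^ k)" by (simp only: frob_add) simp
  finally show ?thesis by (simp add: eq_neg_iff_add_eq_0 add.commute)
qed

lemma pow_card: "(x::'a) ^ (q ^ n) = x"
proof (cases "x = 0")
  case False
  have cg: "card (UNIV :: 'a set) > 0" by (simp add: finite_UNIV_card_ge_0)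
  have "x * (\<Prod>y\<in>UNIV-{0}. x * y) = x * x ^ (card (UNIV :: 'a set) - 1) * \<Prod>(UNIV-{0})"
    by (simp add: prod.distrib mult_ac)
  also have "x * x ^ (card (UNIV :: 'a set) - 1) = x ^ Suc (card (UNIV :: 'a set) - 1)"
    by (subst power_Suc) auto
  also have "Suc (card (UNIV :: 'a set) - 1) = card (UNIV :: 'a set)"
    using cg by simp
  also have "(\<Prod>y\<in>UNIV-{0}. x * y) = (\<Prod>y\<in>UNIV-{0}. y)"
    by (rule prod.reindex_bij_witness[of _ "\<lambda>y. y / x" "\<lambda>y. x * y"]) (use False in auto)
  finally show ?thesis using card_a
    by simp
qed (use q_ge2 in simp)

lemma SF_0: "0 \<in> SF k" using q_ge2 by (simp add: subfield_set_def)
lemma SF_1: "1 \<in> SF k" by (simp add: subfield_set_def)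
lemma SF_add: "x \<in> SF k \<Longrightarrow> y \<in> SF k \<Longrightarrow> x + y \<in> SF k"
  by (simp add: subfield_set_def frob_add)
lemma SF_mult: "x \<in> SF k \<Longrightarrow> y \<in> SF k \<Longrightarrow> x * y \<in> SF k"
  by (simp add: subfield_set_def power_mult_distrib)
lemma SF_neg: "x \<in> SF k \<Longrightarrow> - x \<in> SF k"
proof -
  assume "x \<in> SF k"
  have "(-x) ^ (q ^ k) = ((-1) * x) ^ (q ^ k)" by simp
  also have "\<dots> = (-1) ^ (q ^ k) * x ^ (q ^ k)" by (rule power_mult_distrib)
  also have "\<dots> = - x" using \<open>x \<in> SF k\<close> frob_neg1 by (simp add: subfield_set_def)
  finally show ?thesis by (simp add: subfield_set_def)
qed
lemma SF_inv: "x \<in> SF k \<Longrightarrow> inverse x \<in> SF k"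
  by (simp add: subfield_set_def power_inverse)
lemma SF_diff: "x \<in> SF k \<Longrightarrow> y \<in> SF k \<Longrightarrow> x - y \<in> SF k"
  using SF_add SF_neg by (metis diff_conv_add_uminus)
lemma SF_n: "SF n = UNIV" by (simp add: subfield_set_def pow_card)

lemma SF_multiple: "x \<in> SF a \<Longrightarrow> x \<in> SF (a * b)"
proof (induction b)
  case 0
  then show ?case by (simp add: subfield_set_def)
next
  case (Suc b)
  then have "x ^ (q ^ (a * b)) = x" by (simp add: subfield_set_def)
  moreover have "x ^ (q ^ a) = x" using Suc.prems by (simp add: subfield_set_def)
  ultimately have "x ^ (q ^ (a * Suc b)) = x"
    by (simp add: power_add power_mult)
  then show ?case by (simp add: subfield_set_def)
qed

lemma SF_sub: "x \<in> SF a \<Longrightarrow> x \<in> SF b \<Longrightarrow> b \<le> a \<Longrightarrow> x \<in> SF (a - b)"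
proof -
  assume a: "x \<in> SF a" and b: "x \<in> SF b" and le: "b \<le> a"
  have "x ^ (q ^ (a - b)) = (x ^ (q ^ b)) ^ (q ^ (a - b))" using b by (simp add: subfield_set_def)
  also have "\<dots> = x ^ (q ^ a)" using le
    by (simp add: power_mult[symmetric] power_add[symmetric])
  also have "\<dots> = x" using a by (simp add: subfield_set_def)
  finally show ?thesis by (simp add: subfield_set_def)
qed

lemma SF_gcd: "x \<in> SF a \<Longrightarrow> x \<in> SF b \<Longrightarrow> x \<in> SF (gcd a b)"
proof (cases "a = 0")
  case True
  assume "x \<in> SF b" then show ?thesis using True by simp
next
  case False
  assume xa: "x \<in> SF a" and xb: "x \<in> SF b"
  obtain u v where uv: "a * u = b * v + gcd a b" using bezout_nat[OF False] by blast
  have "x \<in> SF (a * u)" using SF_multiple xa by blast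
  moreover have "x \<in> SF (b * v)" using SF_multiple xb by blast
  moreover have "b * v \<le> a * u" using uv by simp
  ultimately have "x \<in> SF (a * u - b * v)" using SF_sub by blast
  moreover have "a * u - b * v = gcd a b" using uv by simp
  ultimately show ?thesis by simp
qed

definition XP :: "nat \<Rightarrow> 'a poly" where "XP k = [:0,1:] ^ (q ^ k) - [:0,1:]"

lemma XP_roots: "{x. poly (XP k) x = 0} = SF k"
  by (simp add: XP_def subfield_set_def)

lemma XP_degree: "k \<ge> 1 \<Longrightarrow> degree (XP k) = q ^ k"
proof -
  assume k: "k \<ge> 1"
  have "q ^ 1 \<le> q ^ k" using k q_ge2 by (intro power_increasing) auto
  then have "q \<le> q ^ k" by simp
  then have gt: "q ^ k > 1" using q_ge2 by linarith
  have "degree ([:0,1:] ^ (q ^ k) :: 'a poly) = q ^ k" by (simp add: degree_power_eq)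
  moreover have "degree ([:0,1:] :: 'a poly) = 1" by simp
  moreover have "XP k = [:0,1:] ^ (q ^ k) + (- [:0,1:])" by (simp add: XP_def)
  ultimately show ?thesis using gt
    by (metis degree_add_eq_left degree_minus)
qed

lemma XP_nz: "k \<ge> 1 \<Longrightarrow> XP k \<noteq> 0"
proof
  assume "k \<ge> 1" "XP k = 0"
  then have "q ^ k = 0" using XP_degree[of k] by simp
  then show False using q_ge2 by simp
qed

lemma card_SF_le: "k \<ge> 1 \<Longrightarrow> card (SF k) \<le> q ^ k"
proof -
  assume k: "k \<ge> 1"
  have "card {x. poly (XP k) x = 0} \<le> degree (XP k)" using card_poly_roots_bound[OF XP_nz[OF k]] .
  then show ?thesis using XP_roots XP_degree[OF k] by simp
qed

lemma card_SF: assumes "k dvd n" shows "card (SF k) = q ^ k"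
proof -
  have k1: "k \<ge> 1" using assms n_pos by (cases k) auto
  obtain j where nj: "n = k * j" using assms by blast
  have "XP k dvd XP n" unfolding XP_def nj by (rule dvd_pow_diff_gen)
  then obtain S where S: "XP n = XP k * S" by blast
  have Snz: "S \<noteq> 0" using S XP_nz n_pos by auto
  have dS: "degree S = q ^ n - q ^ k"
    using S XP_degree[OF k1] XP_degree[OF n_pos] Snz XP_nz[OF k1] by (simp add: degree_mult_eq)
  have "UNIV \<subseteq> SF k \<union> {x. poly S x = 0}"
  proof
    fix x :: 'a
    have "poly (XP n) x = 0" using XP_roots SF_n by blast
    then show "x \<in> SF k \<union> {x. poly S x = 0}" using S XP_roots by auto
  qed
  then have "card (UNIV :: 'a set) \<le> card (SF k \<union> {x. poly S x = 0})"
    by (intro card_mono) simp_all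
  then have "q ^ n \<le> card (SF k \<union> {x. poly S x = 0})" using card_a by simp
  also have "\<dots> \<le> card (SF k) + card {x. poly S x = 0}" by (rule card_Un_le)
  also have "\<dots> \<le> card (SF k) + (q ^ n - q ^ k)" using card_poly_roots_bound[OF Snz] dS by simp
  moreover have "q ^ k \<le> q ^ n" using assms n_pos q_ge2 by (intro power_increasing) (simp_all add: dvd_imp_le)
  ultimately have "q ^ k \<le> card (SF k)" by linarith
  then show ?thesis using card_SF_le[OF k1] by simp
qed

lemma SF_dvd: assumes "a dvd n" "b dvd n" "SF a \<subseteq> SF b" shows "a dvd b"
proof -
  have "SF a \<subseteq> SF (gcd a b)" using assms(3) SF_gcd by blast
  then have "card (SF a) \<le> card (SF (gcd a b))" by (simp add: card_mono)
  moreover have "gcd a b dvd n" using assms by (meson dvd_trans gcd_dvd1)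
  ultimately have "q ^ a \<le> q ^ gcd a b" using card_SF assms by simp
  then have "a \<le> gcd a b" using q_ge2 by (simp add: power_le_imp_le_exp)
  moreover have "a > 0" using assms(1) n_pos by (cases a) auto
  ultimately have "gcd a b = a" by (meson dvd_imp_le gcd_dvd1 gcd_pos_nat le_antisym)
  then show ?thesis by (metis gcd_dvd2)
qed

end


context ffq
begin

lemma card_SF1: "card (SF 1) = q" using card_SF[of 1] by simp

lemma sub_ext:
  fixes V W :: "'a set"
  assumes V: "is_subspace_over q 1 V" and W: "is_subspace_over q 1 W" and WV: "W \<subseteq> V"
  shows "\<exists>k. card V = card W * q ^ k"
  using W WV
proof (induction "card V - card W" arbitrary: W rule: less_induct)
  case less
  show ?case
  proof (cases "W = V")
    case True
    then show ?thesis by (rule_tac x=0 in exI) simp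
  next
    case False
    then obtain v where v: "v \<in> V" "v \<notin> W" using less.prems by blast
    define W' where "W' = (\<lambda>(w, c). w + c * v) ` (W \<times> SF 1)"
    have Wsub: "0 \<in> W" "\<And>u w. u \<in> W \<Longrightarrow> w \<in> W \<Longrightarrow> u + w \<in> W" "\<And>u. u \<in> W \<Longrightarrow> - u \<in> W"
      "\<And>c u. c \<in> SF 1 \<Longrightarrow> u \<in> W \<Longrightarrow> c * u \<in> W"
      using less.prems(1) unfolding is_subspace_over_def by auto
    have Vsub: "0 \<in> V" "\<And>u w. u \<in> V \<Longrightarrow> w \<in> V \<Longrightarrow> u + w \<in> V" "\<And>u. u \<in> V \<Longrightarrow> - u \<in> V"
      "\<And>c u. c \<in> SF 1 \<Longrightarrow> u \<in> V \<Longrightarrow> c * u \<in> V"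
      using V unfolding is_subspace_over_def by auto
    have memW': "w + c * v \<in> W'" if "w \<in> W" "c \<in> SF 1" for w c
      unfolding W'_def using that by force
    have W'V: "W' \<subseteq> V"
      unfolding W'_def using less.prems(2) v Vsub by auto
    have W'sub: "is_subspace_over q 1 W'"
      unfolding is_subspace_over_def
    proof (intro conjI ballI)
      show "0 \<in> W'" using memW'[OF Wsub(1) SF_0] by simp
    next
      fix x y assume "x \<in> W'" "y \<in> W'"
      then obtain w1 c1 w2 c2 where "x = w1 + c1 * v" "y = w2 + c2 * v" "w1 \<in> W" "c1 \<in> SF 1"
        "w2 \<in> W" "c2 \<in> SF 1" unfolding W'_def by auto
      moreover have "x + y = (w1 + w2) + (c1 + c2) * v" using calculation by (simp add: algebra_simps)
      ultimately show "x + y \<in> W'" using memW' Wsub SF_add by metis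
    next
      fix x assume "x \<in> W'"
      then obtain w1 c1 where "x = w1 + c1 * v" "w1 \<in> W" "c1 \<in> SF 1" unfolding W'_def by auto
      moreover have "- x = (- w1) + (- c1) * v" using calculation by (simp add: algebra_simps)
      ultimately show "- x \<in> W'" using memW' Wsub SF_neg by metis
    next
      fix c x assume c: "c \<in> SF 1" and "x \<in> W'"
      then obtain w1 c1 where "x = w1 + c1 * v" "w1 \<in> W" "c1 \<in> SF 1" unfolding W'_def by auto
      moreover have "c * x = (c * w1) + (c * c1) * v" using calculation by (simp add: algebra_simps)
      ultimately show "c * x \<in> W'" using memW' Wsub SF_mult c by metis
    qed
    have inj: "inj_on (\<lambda>(w, c). w + c * v) (W \<times> SF 1)"
    proof (rule inj_onI, clarify)
      fix w c w' c' assume a: "w \<in> W" "c \<in> SF 1" "w' \<in> W" "c' \<in> SF 1" "w + c * v = w' + c' * v"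
      show "w = w' \<and> c = c'"
      proof (cases "c = c'")
        case True then show ?thesis using a by simp
      next
        case False
        have "(c - c') * v = w' - w" using a(5) by (simp add: algebra_simps)
        then have "v = inverse (c - c') * (w' - w)" using False by (simp add: field_simps)
        moreover have "w' - w \<in> W" using a Wsub by (metis diff_conv_add_uminus)
        moreover have "inverse (c - c') \<in> SF 1" using a SF_diff SF_inv by blast
        ultimately have "v \<in> W" using Wsub by simp
        then show ?thesis using v by simp
      qed
    qed
    have fW: "finite W" by simp
    have cW': "card W' = card W * q"
      unfolding W'_def using card_image[OF inj] card_SF1 by (simp add: card_cartesian_product)
    have "card W > 0" using Wsub(1) fW card_gt_0_iff by blast
    then have lt: "card W < card W'" using cW' q_ge2 by simp
    have "card W' \<le> card V" using W'V by (simp add: card_mono)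
    then have "card V - card W' < card V - card W" using lt by linarith
    then obtain k where "card V = card W' * q ^ k" using less.hyps W'sub W'V by blast
    then have "card V = card W * q ^ Suc k" using cW' by simp
    then show ?thesis by blast
  qed
qed

lemma sub_card:
  fixes V :: "'a set"
  assumes V: "is_subspace_over q 1 V"
  shows "\<exists>d. card V = q ^ d"
proof -
  have "is_subspace_over q 1 {0}" unfolding is_subspace_over_def by simp
  moreover have "{0} \<subseteq> V" using V unfolding is_subspace_over_def by simp
  ultimately show ?thesis using sub_ext[OF V] by fastforce
qed

lemma field_set:
  assumes T1: "SF 1 \<subseteq> T" and Tadd: "\<And>x y. x \<in> T \<Longrightarrow> y \<in> T \<Longrightarrow> x + y \<in> T"
    and Tneg: "\<And>x. x \<in> T \<Longrightarrow> - x \<in> T" and Tmul: "\<And>x y. x \<in> T \<Longrightarrow> y \<in> T \<Longrightarrow> x * y \<in> T"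
  shows "\<exists>d. d dvd n \<and> T = SF d"
proof -
  have "is_subspace_over q 1 T" unfolding is_subspace_over_def
    using T1 SF_0 Tadd Tneg Tmul by blast
  then obtain d where d: "card T = q ^ d" using sub_card by blast
  have T01: "0 \<in> T" "1 \<in> T" using T1 SF_0 SF_1 by auto
  have "card {0::'a, 1} \<le> card T" using T01 by (intro card_mono) auto
  then have "2 \<le> card T" by simp
  then have d1: "d \<ge> 1" using d by (cases d) auto
  have pw: "t ^ (q ^ d) = t" if t: "t \<in> T" for t
  proof (cases "t = 0")
    case True then show ?thesis using q_ge2 by simp
  next
    case False
    define T0 where "T0 = T - {0}"
    have fin: "finite T0" by simp
    have img: "(\<lambda>y. t * y) ` T0 = T0"
    proof (rule endo_inj_surj[OF fin])
      show "(\<lambda>y. t * y) ` T0 \<subseteq> T0" using t Tmul False unfolding T0_def by auto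
      show "inj_on (\<lambda>y. t * y) T0" using False by (auto intro: inj_onI)
    qed
    have "(\<Prod>y\<in>T0. t * y) = (\<Prod>y\<in>(\<lambda>y. t * y) ` T0. y)"
      using False by (subst prod.reindex) (auto intro: inj_onI)
    also have "\<dots> = (\<Prod>y\<in>T0. y)" using img by simp
    finally have e: "t ^ card T0 * (\<Prod>y\<in>T0. y) = (\<Prod>y\<in>T0. y)"
      by (simp add: prod.distrib)
    have "(\<Prod>y\<in>T0. y) \<noteq> 0" using fin unfolding T0_def by simp
    then have "t ^ card T0 = 1" using e by simp
    moreover have "card T0 = q ^ d - 1" unfolding T0_def using d T01 by simp
    ultimately have "t ^ (q ^ d - 1) * t = t" by simp
    moreover have "q ^ d - 1 + 1 = q ^ d" using q_ge2 by simp
    ultimately show ?thesis by (metis power_add power_one_right)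
  qed
  have TS: "T \<subseteq> SF d" using pw by (auto simp: subfield_set_def)
  have "card T \<le> card (SF d)" using TS by (simp add: card_mono)
  then have "card T = card (SF d)" using card_SF_le[OF d1] d by simp
  then have TSe: "T = SF d" using TS by (intro card_subset_eq) auto
  define g where "g = gcd d n"
  have "SF d \<subseteq> SF g" unfolding g_def using SF_gcd SF_n by blast
  then have "card (SF d) \<le> card (SF g)" by (simp add: card_mono)
  moreover have "g dvd n" unfolding g_def by simp
  ultimately have "q ^ d \<le> q ^ g" using card_SF TSe d by simp
  then have "d \<le> g" using q_ge2 by (simp add: power_le_imp_le_exp)
  moreover have "g \<le> d" unfolding g_def using d1 by (simp add: dvd_imp_le)
  ultimately have "d = g" by simp
  then have "d dvd n" unfolding g_def by (metis gcd_dvd2)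
  then show ?thesis using TSe by blast
qed

end


definition stab :: "'a::field set \<Rightarrow> 'a set" where
  "stab U = {c. \<forall>u\<in>U. c * u \<in> U}"

definition fstab :: "'a::field set list \<Rightarrow> 'a set" where
  "fstab F = {c. \<forall>i<length F. c \<in> stab (F ! i)}"

lemma set_mult_mult: "set_mult (set_mult U a) b = set_mult U (a * b)"
  unfolding set_mult_def by (auto simp: image_image mult.assoc)

lemma set_mult_1: "set_mult U 1 = U"
  unfolding set_mult_def by simp

lemma set_mult_stab:
  fixes U :: "'a::field set"
  assumes "finite U" "g \<noteq> 0"
  shows "set_mult U g = U \<longleftrightarrow> g \<in> stab U"
proof
  assume "set_mult U g = U"
  then show "g \<in> stab U" unfolding stab_def set_mult_def by (auto simp: mult.commute)
next
  assume "g \<in> stab U"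
  then have "(\<lambda>u. u * g) ` U \<subseteq> U" unfolding stab_def by (auto simp: mult.commute)
  moreover have "inj_on (\<lambda>u. u * g) U" using assms(2) by (auto intro: inj_onI)
  ultimately show "set_mult U g = U" unfolding set_mult_def using endo_inj_surj[OF assms(1)] by blast
qed

lemma set_mult_eq_iff:
  fixes U :: "'a::field set"
  assumes "finite U" "g \<noteq> 0" "h \<noteq> 0"
  shows "set_mult U g = set_mult U h \<longleftrightarrow> g / h \<in> stab U"
proof -
  have "set_mult U g = set_mult U h \<longleftrightarrow> set_mult U (g / h) = U"
  proof
    assume "set_mult U g = set_mult U h"
    then have "set_mult (set_mult U g) (inverse h) = set_mult (set_mult U h) (inverse h)" by simp
    then show "set_mult U (g / h) = U" using assms by (simp add: set_mult_mult set_mult_1 divide_inverse)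
  next
    assume "set_mult U (g / h) = U"
    then have "set_mult (set_mult U (g / h)) h = set_mult U h" by simp
    then show "set_mult U g = set_mult U h" using assms by (simp add: set_mult_mult)
  qed
  also have "\<dots> \<longleftrightarrow> g / h \<in> stab U"
  proof -
    have "g / h \<noteq> 0" using assms by simp
    then show ?thesis using set_mult_stab[OF assms(1)] by blast
  qed
  finally show ?thesis .
qed

lemma disj_gen:
  fixes F :: "'a::{field,finite} set list" and G :: "'a set"
  assumes G0: "0 \<notin> G"
  shows "disjoint_code (length F) ((\<lambda>g. flag_mult F g) ` G) \<longleftrightarrow>
    (\<forall>i<length F. \<forall>g\<in>G. \<forall>h\<in>G. g / h \<in> stab (F ! i) \<longrightarrow> g / h \<in> fstab F)"
proof -
  define C where "C = (\<lambda>g. flag_mult F g) ` G"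
  have finC: "finite C" unfolding C_def by simp
  have sm_eq: "set_mult (F ! k) g = set_mult (F ! k) h \<longleftrightarrow> g / h \<in> stab (F ! k)"
    if "g \<in> G" "h \<in> G" for g h k
  proof -
    have "g \<noteq> 0" "h \<noteq> 0" using that G0 by auto
    then show ?thesis using set_mult_eq_iff[of "F ! k" g h] by simp
  qed
  have fm_eq: "flag_mult F g = flag_mult F h \<longleftrightarrow> g / h \<in> fstab F" if "g \<in> G" "h \<in> G" for g h
  proof -
    have "flag_mult F g = flag_mult F h \<longleftrightarrow> (\<forall>k<length F. set_mult (F ! k) g = set_mult (F ! k) h)"
      unfolding flag_mult_def by (simp add: list_eq_iff_nth_eq)
    also have "\<dots> \<longleftrightarrow> g / h \<in> fstab F"
      using sm_eq[OF that] unfolding fstab_def by simp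
    finally show ?thesis .
  qed
  have comp: "(flag_mult F g) ! i = set_mult (F ! i) g" if "i < length F" for g i
    unfolding flag_mult_def using that by simp
  have "disjoint_code (length F) C \<longleftrightarrow> (\<forall>i<length F. inj_on (\<lambda>Fl. Fl ! i) C)"
  proof -
    have "card ((\<lambda>Fl. Fl ! i) ` C) = card C \<longleftrightarrow> inj_on (\<lambda>Fl. Fl ! i) C" for i
      using finC card_image eq_card_imp_inj_on by blast
    then show ?thesis unfolding disjoint_code_def projected_code_def by simp
  qed
  also have "\<dots> \<longleftrightarrow> (\<forall>i<length F. \<forall>g\<in>G. \<forall>h\<in>G. g / h \<in> stab (F ! i) \<longrightarrow> g / h \<in> fstab F)"
  proof -
    have "inj_on (\<lambda>Fl. Fl ! i) C \<longleftrightarrow> (\<forall>g\<in>G. \<forall>h\<in>G. g / h \<in> stab (F ! i) \<longrightarrow> g / h \<in> fstab F)"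
      if i: "i < length F" for i
    proof -
      have "inj_on (\<lambda>Fl. Fl ! i) C \<longleftrightarrow>
        (\<forall>g\<in>G. \<forall>h\<in>G. (flag_mult F g) ! i = (flag_mult F h) ! i \<longrightarrow> flag_mult F g = flag_mult F h)"
        unfolding C_def inj_on_def by blast
      also have "\<dots> \<longleftrightarrow> (\<forall>g\<in>G. \<forall>h\<in>G. g / h \<in> stab (F ! i) \<longrightarrow> g / h \<in> fstab F)"
        using comp[OF i] fm_eq sm_eq by simp
      finally show ?thesis .
    qed
    then show ?thesis by blast
  qed
  finally show ?thesis unfolding C_def .
qed

context ffq
begin

lemma best_gen:
  assumes T1: "SF 1 \<subseteq> T" and Tadd: "\<And>x y. x \<in> T \<Longrightarrow> y \<in> T \<Longrightarrow> x + y \<in> T"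
    and Tneg: "\<And>x. x \<in> T \<Longrightarrow> - x \<in> T" and Tmul: "\<And>x y. x \<in> T \<Longrightarrow> y \<in> T \<Longrightarrow> x * y \<in> T"
    and P: "\<And>k. P k \<longleftrightarrow> (k dvd n \<and> SF k \<subseteq> T)"
  shows "(GREATEST k. P k) dvd n \<and> T = SF (GREATEST k. P k)"
proof -
  obtain d where d: "d dvd n" "T = SF d" using field_set[OF T1 Tadd Tneg Tmul] by blast
  have "d > 0" using d n_pos by (cases d) auto
  have "(GREATEST k. P k) = d"
  proof (rule Greatest_equality)
    show "P d" using P d by simp
    fix k assume "P k"
    then have "k dvd d" using P d SF_dvd by blast
    then show "k \<le> d" using \<open>d > 0\<close> by (simp add: dvd_imp_le)
  qed
  then show ?thesis using d by simp
qed

lemma stab_props: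
  assumes U: "is_subspace_over q 1 U"
  shows "SF 1 \<subseteq> stab U" "\<And>x y. x \<in> stab U \<Longrightarrow> y \<in> stab U \<Longrightarrow> x + y \<in> stab U"
    "\<And>x. x \<in> stab U \<Longrightarrow> - x \<in> stab U" "\<And>x y. x \<in> stab U \<Longrightarrow> y \<in> stab U \<Longrightarrow> x * y \<in> stab U"
  using U unfolding is_subspace_over_def stab_def by (auto simp: distrib_right mult.assoc)

lemma friend_iff:
  assumes U: "is_subspace_over q 1 U"
  shows "friend q n k U \<longleftrightarrow> (k dvd n \<and> SF k \<subseteq> stab U)"
  using U unfolding friend_def is_subspace_over_def stab_def by auto

lemma best_friend_stab:
  assumes U: "is_subspace_over q 1 U"
  shows "best_friend q n U dvd n \<and> stab U = SF (best_friend q n U)"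
  unfolding best_friend_def
  by (rule best_gen[OF stab_props[OF U] friend_iff[OF U]])

lemma flag_friend_iff:
  assumes U: "\<And>i. i < length F \<Longrightarrow> is_subspace_over q 1 (F ! i)" and r: "length F \<ge> 1"
  shows "flag_friend q n k F \<longleftrightarrow> (k dvd n \<and> SF k \<subseteq> fstab F)"
proof -
  have "flag_friend q n k F \<longleftrightarrow> (\<forall>i<length F. k dvd n \<and> SF k \<subseteq> stab (F ! i))"
    unfolding flag_friend_def using friend_iff[OF U] by simp
  also have "\<dots> \<longleftrightarrow> (k dvd n \<and> (\<forall>i<length F. SF k \<subseteq> stab (F ! i)))"
    using r by (metis One_nat_def Suc_le_eq)
  also have "\<dots> \<longleftrightarrow> (k dvd n \<and> SF k \<subseteq> fstab F)"
    unfolding fstab_def by auto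
  finally show ?thesis .
qed

lemma flag_best_friend_stab:
  assumes U: "\<And>i. i < length F \<Longrightarrow> is_subspace_over q 1 (F ! i)" and r: "length F \<ge> 1"
  shows "flag_best_friend q n F dvd n \<and> fstab F = SF (flag_best_friend q n F)"
  unfolding flag_best_friend_def
proof (rule best_gen[OF _ _ _ _ flag_friend_iff[OF U r]])
  show "SF 1 \<subseteq> fstab F" using stab_props(1)[OF U] unfolding fstab_def by auto
  show "\<And>x y. x \<in> fstab F \<Longrightarrow> y \<in> fstab F \<Longrightarrow> x + y \<in> fstab F"
    using stab_props(2)[OF U] unfolding fstab_def by auto
  show "\<And>x. x \<in> fstab F \<Longrightarrow> - x \<in> fstab F"
    using stab_props(3)[OF U] unfolding fstab_def by auto
  show "\<And>x y. x \<in> fstab F \<Longrightarrow> y \<in> fstab F \<Longrightarrow> x * y \<in> fstab F"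
    using stab_props(4)[OF U] unfolding fstab_def by auto
qed

end


lemma set_aux: "T \<subseteq> S \<Longrightarrow> 0 \<notin> C \<Longrightarrow> (\<forall>x\<in>C. x \<in> S \<longrightarrow> x \<in> T) \<longleftrightarrow> C \<inter> (S - {0}) = C \<inter> (T - {0})"
proof
  assume "T \<subseteq> S" "0 \<notin> C" "\<forall>x\<in>C. x \<in> S \<longrightarrow> x \<in> T"
  then show "C \<inter> (S - {0}) = C \<inter> (T - {0})" by auto
next
  assume "T \<subseteq> S" "0 \<notin> C" "C \<inter> (S - {0}) = C \<inter> (T - {0})"
  then show "\<forall>x\<in>C. x \<in> S \<longrightarrow> x \<in> T" by auto
qed

lemma all_lt_cong: "(\<And>i. i < r \<Longrightarrow> P i \<longleftrightarrow> Q i) \<Longrightarrow> (\<forall>i<r. P i) \<longleftrightarrow> (\<forall>i<(r::nat). Q i)"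
  by auto

theorem proposition4p19:
  fixes q n m :: nat and F :: "'a::{field,finite} set list" and \<beta> :: 'a
  assumes "prime_power q"
    and "card (UNIV :: 'a set) = q ^ n"
    and "is_flag q F"
    and "m = flag_best_friend q n F"
    and "\<beta> \<noteq> 0"
  shows "(disjoint_code (length F) (Orb_beta \<beta> F) \<longleftrightarrow>
           (\<forall>i<length F. cyclic_subgroup \<beta> \<inter> (subfield_set q (best_friend q n (F ! i)) - {0})
                          = cyclic_subgroup \<beta> \<inter> (subfield_set q m - {0})))
         \<and> (disjoint_code (length F) (Orb F) \<longleftrightarrow> (\<forall>i<length F. best_friend q n (F ! i) = m))"
proof -
  interpret ffq q n "TYPE('a)" using assms(1,2) by unfold_locales
  have U: "\<And>i. i < length F \<Longrightarrow> is_subspace_over q 1 (F ! i)" and r: "length F \<ge> 1"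
    using assms(3) unfolding is_flag_def by blast+
  have bf: "\<And>i. i < length F \<Longrightarrow> best_friend q n (F ! i) dvd n \<and> stab (F ! i) = SF (best_friend q n (F ! i))"
    using best_friend_stab[OF U] by blast
  have fb: "m dvd n" "fstab F = SF m"
    using flag_best_friend_stab[OF U r] assms(4) by simp_all
  have fsub: "\<And>i. i < length F \<Longrightarrow> fstab F \<subseteq> stab (F ! i)"
    unfolding fstab_def by auto
  define C where "C = cyclic_subgroup \<beta>"
  define ord where "ord = mult_order \<beta>"
  have ex: "\<exists>k. k > 0 \<and> \<beta> ^ k = 1"
  proof (intro exI conjI)
    have "card {0::'a, 1} \<le> card (UNIV :: 'a set)" by (intro card_mono) auto
    then have "q ^ n \<ge> 2" using assms(2) by simp
    then show "q ^ n - 1 > 0" by simp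
    have "\<beta> ^ (q ^ n - 1) * \<beta> = \<beta> ^ Suc (q ^ n - 1)" by (simp only: power_Suc2)
    also have "Suc (q ^ n - 1) = q ^ n" using \<open>q ^ n \<ge> 2\<close> by simp
    finally have "\<beta> ^ (q ^ n - 1) * \<beta> = \<beta> ^ (q ^ n)" .
    also have "\<dots> = \<beta>" by (rule pow_card)
    finally show "\<beta> ^ (q ^ n - 1) = 1" using assms(5) by simp
  qed
  have ordp: "ord > 0 \<and> \<beta> ^ ord = 1"
    unfolding ord_def mult_order_def by (rule LeastI_ex[OF ex])
  define G where "G = (\<lambda>j. \<beta> ^ j) ` {..<ord}"
  have OrbB: "Orb_beta \<beta> F = (\<lambda>g. flag_mult F g) ` G"
    unfolding Orb_beta_def G_def ord_def by (simp add: setcompr_eq_image image_image lessThan_def)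
  have G0: "0 \<notin> G" unfolding G_def using assms(5) by auto
  have C0: "0 \<notin> C" unfolding C_def cyclic_subgroup_def using assms(5) by auto
  have pmod: "\<beta> ^ j = \<beta> ^ (j mod ord)" for j
  proof -
    have "\<beta> ^ j = \<beta> ^ (ord * (j div ord) + j mod ord)" by simp
    also have "\<dots> = (\<beta> ^ ord) ^ (j div ord) * \<beta> ^ (j mod ord)" by (simp only: power_add power_mult)
    finally show ?thesis using ordp by simp
  qed
  have quot: "(\<forall>g\<in>G. \<forall>h\<in>G. P (g / h)) \<longleftrightarrow> (\<forall>x\<in>C. P x)" for P
  proof
    assume a: "\<forall>g\<in>G. \<forall>h\<in>G. P (g / h)"
    show "\<forall>x\<in>C. P x"
    proof
      fix x assume "x \<in> C"
      then obtain j where j: "x = \<beta> ^ j" unfolding C_def cyclic_subgroup_def by auto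
      have "\<beta> ^ (j mod ord) \<in> G" unfolding G_def using ordp by auto
      moreover have "\<beta> ^ 0 \<in> G" unfolding G_def using ordp by (intro imageI) simp
      ultimately have "P (\<beta> ^ (j mod ord) / \<beta> ^ 0)" using a by blast
      then show "P x" using j pmod by simp
    qed
  next
    assume a: "\<forall>x\<in>C. P x"
    show "\<forall>g\<in>G. \<forall>h\<in>G. P (g / h)"
    proof (intro ballI)
      fix g h assume "g \<in> G" "h \<in> G"
      then obtain a b where ab: "g = \<beta> ^ a" "h = \<beta> ^ b" "b < ord" unfolding G_def by auto
      have "\<beta> ^ b * \<beta> ^ (ord - b) = 1" using ab(3) ordp by (simp flip: power_add)
      then have "inverse h = \<beta> ^ (ord - b)" using ab(2) by (simp add: inverse_unique)
      then have "g / h = \<beta> ^ a * \<beta> ^ (ord - b)" using ab(1) by (simp add: divide_inverse)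
      also have "\<dots> = \<beta> ^ (a + (ord - b))" by (simp add: power_add)
      finally have "g / h \<in> C" unfolding C_def cyclic_subgroup_def by auto
      then show "P (g / h)" using a by blast
    qed
  qed
  have A: "disjoint_code (length F) (Orb_beta \<beta> F) \<longleftrightarrow>
           (\<forall>i<length F. C \<inter> (subfield_set q (best_friend q n (F ! i)) - {0})
                          = C \<inter> (subfield_set q m - {0}))"
  proof -
    have "disjoint_code (length F) (Orb_beta \<beta> F) \<longleftrightarrow>
      (\<forall>i<length F. \<forall>x\<in>C. x \<in> stab (F ! i) \<longrightarrow> x \<in> fstab F)"
    proof -
      have "\<And>i. (\<forall>g\<in>G. \<forall>h\<in>G. g / h \<in> stab (F ! i) \<longrightarrow> g / h \<in> fstab F) \<longleftrightarrow>
          (\<forall>x\<in>C. x \<in> stab (F ! i) \<longrightarrow> x \<in> fstab F)"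
        by (rule quot)
      then show ?thesis unfolding OrbB using disj_gen[OF G0, of F] by simp
    qed
    also have "\<dots> \<longleftrightarrow> (\<forall>i<length F. C \<inter> (stab (F ! i) - {0}) = C \<inter> (fstab F - {0}))"
    proof -
      have "\<And>i. i < length F \<Longrightarrow> (\<forall>x\<in>C. x \<in> stab (F ! i) \<longrightarrow> x \<in> fstab F) \<longleftrightarrow>
         C \<inter> (stab (F ! i) - {0}) = C \<inter> (fstab F - {0})"
        by (rule set_aux[OF fsub C0])
      then show ?thesis by (rule all_lt_cong)
    qed
    also have "\<dots> \<longleftrightarrow> (\<forall>i<length F. C \<inter> (subfield_set q (best_friend q n (F ! i)) - {0})
                          = C \<inter> (subfield_set q m - {0}))"
    proof -
      have "\<And>i. i < length F \<Longrightarrow> (C \<inter> (stab (F ! i) - {0}) = C \<inter> (fstab F - {0})) \<longleftrightarrow>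
        (C \<inter> (subfield_set q (best_friend q n (F ! i)) - {0}) = C \<inter> (subfield_set q m - {0}))"
        using bf fb(2) by simp
      then show ?thesis by (rule all_lt_cong)
    qed
    finally show ?thesis .
  qed
  have B: "disjoint_code (length F) (Orb F) \<longleftrightarrow> (\<forall>i<length F. best_friend q n (F ! i) = m)"
  proof -
    have OrbE: "Orb F = (\<lambda>g. flag_mult F g) ` (UNIV - {0})"
      unfolding Orb_def by auto
    have "disjoint_code (length F) (Orb F) \<longleftrightarrow>
      (\<forall>i<length F. \<forall>g\<in>UNIV - {0}. \<forall>h\<in>UNIV - {0}. g / h \<in> stab (F ! i) \<longrightarrow> g / h \<in> fstab F)"
      unfolding OrbE by (rule disj_gen) simp
    also have "\<dots> \<longleftrightarrow> (\<forall>i<length F. stab (F ! i) \<subseteq> fstab F)"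
    proof -
      have z: "0 \<in> fstab F" using fb SF_0 by simp
      have "(\<forall>g\<in>UNIV - {0}. \<forall>h\<in>UNIV - {0}. g / h \<in> stab (F ! i) \<longrightarrow> g / h \<in> fstab F) \<longleftrightarrow>
          stab (F ! i) \<subseteq> fstab F" for i
      proof
        assume a: "\<forall>g\<in>UNIV - {0}. \<forall>h\<in>UNIV - {0}. g / h \<in> stab (F ! i) \<longrightarrow> g / h \<in> fstab F"
        show "stab (F ! i) \<subseteq> fstab F"
        proof
          fix x assume x: "x \<in> stab (F ! i)"
          show "x \<in> fstab F"
          proof (cases "x = 0")
            case True then show ?thesis using z by simp
          next
            case False
            have "(1::'a) \<in> UNIV - {0}" "x \<in> UNIV - {0}" using False by simp_all
            then have "x / 1 \<in> stab (F ! i) \<longrightarrow> x / 1 \<in> fstab F" using a by blast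
            then show "x \<in> fstab F" using x by simp
          qed
        qed
      next
        assume "stab (F ! i) \<subseteq> fstab F"
        then show "\<forall>g\<in>UNIV - {0}. \<forall>h\<in>UNIV - {0}. g / h \<in> stab (F ! i) \<longrightarrow> g / h \<in> fstab F"
          by blast
      qed
      then show ?thesis by (rule all_lt_cong)
    qed
    also have "\<dots> \<longleftrightarrow> (\<forall>i<length F. best_friend q n (F ! i) = m)"
    proof -
      have "stab (F ! i) \<subseteq> fstab F \<longleftrightarrow> best_friend q n (F ! i) = m" if i: "i < length F" for i
      proof
        assume "stab (F ! i) \<subseteq> fstab F"
        then have "SF (best_friend q n (F ! i)) \<subseteq> SF m" using bf[OF i] fb by simp
        then have 1: "best_friend q n (F ! i) dvd m" using SF_dvd bf[OF i] fb by blast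
        have "SF m \<subseteq> SF (best_friend q n (F ! i))" using fsub[OF i] bf[OF i] fb by simp
        then have "m dvd best_friend q n (F ! i)" using SF_dvd bf[OF i] fb by blast
        then show "best_friend q n (F ! i) = m" using 1 by (simp add: dvd_antisym)
      next
        assume "best_friend q n (F ! i) = m"
        then show "stab (F ! i) \<subseteq> fstab F" using bf[OF i] fb by simp
      qed
      then show ?thesis by (rule all_lt_cong)
    qed
    finally show ?thesis .
  qed
  show ?thesis using A B unfolding C_def by simp
qed


end
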